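(* Let $(a_n)_{n=1}^\infty$ and $(A_n)_{n=1}^\infty$ be sequences of real numbers such that (i) $0<a_{n+1}\le a_n/3$ for all $n\in\mathbb{N}$, and (ii) $\sum_{n=1}^\infty|A_n|/a_n<\infty$. Then the function $f$ on $[0,a_1]$ defined by $$f(x)=\frac{A_n-A_{n+1}}{a_n-a_{n+1}}(x-a_{n+1})+A_{n+1}\ \text{ if } x\in(a_{n+1},a_n],\qquad f(0)=0,$$ is a DCR function on $[0,a_1]$.
   Context: A function on an open interval is DC if it is the difference of two convex functions. A function defined on a nonempty set $D\subset\mathbb{R}$ is DCR if it is the restriction of a DC function defined on $\mathbb{R}$. *)

theory Defs
  imports "HOL-Analysis.Analysis"
begin

definition DC_on :: "real set \<Rightarrow> (real \<Rightarrow> real) \<Rightarrow> bool" where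
  "DC_on I f \<longleftrightarrow> (\<exists>g h. convex_on I g \<and> convex_on I h \<and> (\<forall>x\<in>I. f x = g x - h x))"

definition DCR_on :: "real set \<Rightarrow> (real \<Rightarrow> real) \<Rightarrow> bool" where
  "DCR_on D f \<longleftrightarrow> D \<noteq> {} \<and> (\<exists>F. DC_on UNIV F \<and> (\<forall>x\<in>D. f x = F x))"

end

theory Submission imports Defs begin

lemma ramp_ineq:
  fixes t x y u :: real
  assumes "0 \<le> u" "u \<le> 1"
  shows "max 0 ((1 - u) * x + u * y - t) \<le> (1 - u) * max 0 (x - t) + u * max 0 (y - t)"
proof -
  have "(1 - u) * x + u * y - t = (1 - u) * (x - t) + u * (y - t)" by (simp add: algebra_simps)
  also have "\<dots> \<le> (1 - u) * max 0 (x - t) + u * max 0 (y - t)"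
    using assms by (intro add_mono mult_left_mono) auto
  finally show ?thesis using assms by (simp add: max_def)
qed

lemma L1s:
  fixes c t :: "nat \<Rightarrow> real"
  assumes "\<And>n. 0 \<le> c n" "summable c" "\<And>n. \<bar>t n\<bar> \<le> B"
  shows "summable (\<lambda>n. c n * max 0 (x - t n))"
proof (rule summable_comparison_test'[where g = "\<lambda>n. c n * (\<bar>x\<bar> + B)"])
  show "summable (\<lambda>n. c n * (\<bar>x\<bar> + B))" using assms(2) by (rule summable_mult2)
  fix n
  have "max 0 (x - t n) \<le> \<bar>x\<bar> + B" using assms(3)[of n] by (auto simp: abs_le_iff)
  then show "norm (c n * max 0 (x - t n)) \<le> c n * (\<bar>x\<bar> + B)"
    using assms(1)[of n] by (simp add: abs_mult mult_left_mono)
qed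

lemma L1c:
  fixes c t :: "nat \<Rightarrow> real"
  assumes "\<And>n. 0 \<le> c n" "summable c" "\<And>n. \<bar>t n\<bar> \<le> B"
  shows "convex_on UNIV (\<lambda>x. \<Sum>n. c n * max 0 (x - t n))"
proof (rule convex_onI)
  fix u x y :: real assume u: "u > 0" "u < 1"
  have s: "\<And>z. summable (\<lambda>n. c n * max 0 (z - t n))" using L1s assms by blast
  have "(\<Sum>n. c n * max 0 ((1 - u) *\<^sub>R x + u *\<^sub>R y - t n))
     \<le> (\<Sum>n. (1 - u) * (c n * max 0 (x - t n)) + u * (c n * max 0 (y - t n)))"
  proof (rule suminf_le)
    fix n
    have "c n * max 0 ((1 - u) * x + u * y - t n) \<le> c n * ((1 - u) * max 0 (x - t n) + u * max 0 (y - t n))"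
      using ramp_ineq[of u x y "t n"] u assms(1)[of n] by (intro mult_left_mono) auto
    then show "c n * max 0 ((1 - u) *\<^sub>R x + u *\<^sub>R y - t n) \<le> (1 - u) * (c n * max 0 (x - t n)) + u * (c n * max 0 (y - t n))"
      by (simp add: algebra_simps)
  next
    show "summable (\<lambda>n. c n * max 0 ((1 - u) *\<^sub>R x + u *\<^sub>R y - t n))" using s by blast
    show "summable (\<lambda>n. (1 - u) * (c n * max 0 (x - t n)) + u * (c n * max 0 (y - t n)))"
      using s by (intro summable_add summable_mult) auto
  qed
  also have "\<dots> = (1 - u) * (\<Sum>n. c n * max 0 (x - t n)) + u * (\<Sum>n. c n * max 0 (y - t n))"
    using s by (subst suminf_add[symmetric]) (auto intro: summable_mult simp: suminf_mult)
  finally show "(\<Sum>n. c n * max 0 ((1 - u) *\<^sub>R x + u *\<^sub>R y - t n)) \<le> (1 - u) * (\<Sum>n. c n * max 0 (x - t n)) + u * (\<Sum>n. c n * max 0 (y - t n))" .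
qed auto

lemma L2:
  fixes c t :: "nat \<Rightarrow> real"
  assumes "summable (\<lambda>n. \<bar>c n\<bar>)" "\<And>n. \<bar>t n\<bar> \<le> B"
  shows "summable (\<lambda>n. c n * max 0 (x - t n))" "DC_on UNIV (\<lambda>x. \<Sum>n. c n * max 0 (x - t n))"
proof -
  define cp where "cp n = max 0 (c n)" for n
  define cm where "cm n = max 0 (- c n)" for n
  have cp: "\<And>n. 0 \<le> cp n" "summable cp"
    unfolding cp_def by (auto intro!: summable_comparison_test'[OF assms(1)])
  have cm: "\<And>n. 0 \<le> cm n" "summable cm"
    unfolding cm_def by (auto intro!: summable_comparison_test'[OF assms(1)])
  have sp: "\<And>z. summable (\<lambda>n. cp n * max 0 (z - t n))" using L1s cp assms(2) by blast
  have sm: "\<And>z. summable (\<lambda>n. cm n * max 0 (z - t n))" using L1s cm assms(2) by blast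
  have eq: "\<And>z n. c n * max 0 (z - t n) = cp n * max 0 (z - t n) - cm n * max 0 (z - t n)"
    unfolding cp_def cm_def by (simp add: max_def algebra_simps)
  show "summable (\<lambda>n. c n * max 0 (x - t n))"
    unfolding eq using sp sm by (rule summable_diff)
  show "DC_on UNIV (\<lambda>x. \<Sum>n. c n * max 0 (x - t n))"
    unfolding DC_on_def
  proof (intro exI conjI ballI)
    show "convex_on UNIV (\<lambda>x. \<Sum>n. cp n * max 0 (x - t n))" using L1c cp assms(2) by blast
    show "convex_on UNIV (\<lambda>x. \<Sum>n. cm n * max 0 (x - t n))" using L1c cm assms(2) by blast
    fix z :: real
    show "(\<Sum>n. c n * max 0 (z - t n)) = (\<Sum>n. cp n * max 0 (z - t n)) - (\<Sum>n. cm n * max 0 (z - t n))"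
      unfolding eq using sp sm by (rule suminf_diff[symmetric])
  qed
qed

lemma DC_add:
  assumes "DC_on UNIV f" "DC_on UNIV g"
  shows "DC_on UNIV (\<lambda>x. f x + g x)"
proof -
  obtain f1 f2 where f: "convex_on UNIV f1" "convex_on UNIV f2" "\<And>x. f x = f1 x - f2 x"
    using assms(1) unfolding DC_on_def by blast
  obtain g1 g2 where g: "convex_on UNIV g1" "convex_on UNIV g2" "\<And>x. g x = g1 x - g2 x"
    using assms(2) unfolding DC_on_def by blast
  show ?thesis unfolding DC_on_def
    by (rule exI[of _ "\<lambda>x. f1 x + g1 x"], rule exI[of _ "\<lambda>x. f2 x + g2 x"])
       (use f g in \<open>auto intro!: convex_on_add\<close>)
qed

theorem lemma4p1:
  fixes a A :: "nat \<Rightarrow> real" and f :: "real \<Rightarrow> real"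
  assumes dec: "\<And>n. n \<ge> 1 \<Longrightarrow> 0 < a (n + 1) \<and> a (n + 1) \<le> a n / 3"
    and summ: "summable (\<lambda>n. \<bar>A (n + 1)\<bar> / a (n + 1))"
    and f_pieces: "\<And>n x. n \<ge> 1 \<Longrightarrow> x \<in> {a (n + 1)<..a n} \<Longrightarrow>
        f x = (A n - A (n + 1)) / (a n - a (n + 1)) * (x - a (n + 1)) + A (n + 1)"
    and f0: "f 0 = 0"
  shows "DCR_on {0..a 1} f"
proof -
  define p where "p k = a (k + 1)" for k
  define v where "v k = A (k + 1)" for k
  define q where "q k = (if k = 0 then 2 * p 0 else p (k - 1))" for k
  define al where "al k = 1 / (p k - p (k + 1))" for k
  define be where "be k = 1 / (q k - p k)" for k
  have pstep: "0 < p (Suc k) \<and> p (Suc k) \<le> p k / 3" for k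
    using dec[of "k+1"] unfolding p_def by simp
  have p0: "0 < p 0" using pstep[of 0] by simp
  have ppos: "0 < p k" for k
    using pstep[of "k - 1"] p0 by (cases k) auto
  have pdec: "decseq p"
    unfolding decseq_Suc_iff
  proof
    fix k show "p (Suc k) \<le> p k" using pstep[of k] ppos[of k] by linarith
  qed
  have panti: "m \<le> n \<Longrightarrow> p n \<le> p m" for m n using pdec by (simp add: decseqD)
  have ple: "p k \<le> p 0" for k using panti[of 0 k] by simp
  have qge: "q k - p k \<ge> p k" for k
  proof (cases k)
    case 0 then show ?thesis by (simp add: q_def)
  next
    case (Suc j) then show ?thesis using pstep[of j] ppos[of j] by (simp add: q_def)
  qed
  have qle: "q k \<le> 2 * p 0" for k using ple[of "k - 1"] p0 by (simp add: q_def)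
  have qpos: "0 < q k" for k using qge[of k] ppos[of k] by simp
  have gap: "p k - p (k + 1) \<ge> 2 * p k / 3" for k using pstep[of k] by simp
  have al_eq: "al k * (p k - p (k + 1)) = 1" for k
    unfolding al_def using gap[of k] ppos[of k] by simp
  have be_eq: "be k * (q k - p k) = 1" for k
    unfolding be_def using qge[of k] ppos[of k] by simp
  have al_pos: "0 < al k" for k unfolding al_def using gap[of k] ppos[of k] by simp
  have be_pos: "0 < be k" for k unfolding be_def using qge[of k] ppos[of k] by simp
  have al_le: "al k \<le> 3 / 2 / p k" for k
    unfolding al_def using gap[of k] ppos[of k] by (simp add: field_simps)
  have be_le: "be k \<le> 1 / p k" for k
    unfolding be_def using qge[of k] ppos[of k] by (simp add: field_simps)
  have sv: "summable (\<lambda>k. \<bar>v k\<bar> / p k)" using summ unfolding v_def p_def by simp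
  have s1: "summable (\<lambda>k. \<bar>v k * al k\<bar>)"
  proof (rule summable_comparison_test'[OF summable_mult[OF sv, of "3/2"]])
    fix k
    have "\<bar>v k\<bar> * al k \<le> \<bar>v k\<bar> * (3 / 2 / p k)" by (rule mult_left_mono[OF al_le]) simp
    then show "norm \<bar>v k * al k\<bar> \<le> 3 / 2 * (\<bar>v k\<bar> / p k)" using al_pos[of k] by (simp add: abs_mult)
  qed
  have s3: "summable (\<lambda>k. \<bar>v k * be k\<bar>)"
  proof (rule summable_comparison_test'[OF sv])
    fix k
    have "\<bar>v k\<bar> * be k \<le> \<bar>v k\<bar> * (1 / p k)" by (rule mult_left_mono[OF be_le]) simp
    then show "norm \<bar>v k * be k\<bar> \<le> \<bar>v k\<bar> / p k" using be_pos[of k] by (simp add: abs_mult)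
  qed
  have s2: "summable (\<lambda>k. \<bar>- (v k * (al k + be k))\<bar>)"
  proof (rule summable_comparison_test'[OF summable_add[OF s1 s3]])
    fix k show "norm \<bar>- (v k * (al k + be k))\<bar> \<le> \<bar>v k * al k\<bar> + \<bar>v k * be k\<bar>"
      by (simp add: distrib_left abs_triangle_ineq)
  qed
  have b1: "\<bar>p (k + 1)\<bar> \<le> 2 * p 0" for k using ple[of "k+1"] ppos[of "k+1"] p0 by simp
  have b2: "\<bar>p k\<bar> \<le> 2 * p 0" for k using ple[of k] ppos[of k] p0 by simp
  have b3: "\<bar>q k\<bar> \<le> 2 * p 0" for k using qle[of k] qpos[of k] by simp
  define S1 where "S1 x = (\<Sum>k. v k * al k * max 0 (x - p (k + 1)))" for x
  define S2 where "S2 x = (\<Sum>k. - (v k * (al k + be k)) * max 0 (x - p k))" for x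
  define S3 where "S3 x = (\<Sum>k. v k * be k * max 0 (x - q k))" for x
  have DC1: "DC_on UNIV S1" unfolding S1_def using L2(2)[OF s1 b1] .
  have DC2: "DC_on UNIV S2" unfolding S2_def using L2(2)[OF s2 b2] .
  have DC3: "DC_on UNIV S3" unfolding S3_def using L2(2)[OF s3 b3] .
  have sm1: "summable (\<lambda>k. v k * al k * max 0 (x - p (k + 1)))" for x using L2(1)[OF s1 b1] .
  have sm2: "summable (\<lambda>k. - (v k * (al k + be k)) * max 0 (x - p k))" for x using L2(1)[OF s2 b2] .
  have sm3: "summable (\<lambda>k. v k * be k * max 0 (x - q k))" for x using L2(1)[OF s3 b3] .
  define T where "T x k = v k * al k * max 0 (x - p (k + 1)) + - (v k * (al k + be k)) * max 0 (x - p k)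
     + v k * be k * max 0 (x - q k)" for x k
  have Feq: "S1 x + S2 x + S3 x = (\<Sum>k. T x k)" for x
    unfolding S1_def S2_def S3_def T_def
    unfolding suminf_add[OF sm1[of x] sm2[of x]]
    by (rule suminf_add[OF summable_add[OF sm1[of x] sm2[of x]] sm3[of x]])
  have DC: "DC_on UNIV (\<lambda>x. S1 x + S2 x + S3 x)"
    using DC_add[OF DC_add[OF DC1 DC2] DC3] .
  have agree: "f x = S1 x + S2 x + S3 x" if x: "x \<in> {0..a 1}" for x
  proof (cases "x = 0")
    case True
    have "T x k = 0" for k using True ppos[of k] ppos[of "k+1"] qpos[of k] by (simp add: T_def)
    then show ?thesis using True f0 Feq[of x] by simp
  next
    case False
    then have xpos: "0 < x" and xle: "x \<le> p 0" using x by (auto simp: p_def)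
    have pbound: "p k \<le> p 0 * (1/3) ^ k" for k
    proof (induction k)
      case (Suc k) then show ?case using pstep[of k] by simp
    qed simp
    obtain K where K: "(1/3::real) ^ K < x / p 0" using real_arch_pow_inv[of "x / p 0" "1/3"] xpos p0 by auto
    have h1: "p K * 3 ^ K \<le> p 0" "p 0 < x * 3 ^ K" using pbound[of K] K p0 by (simp_all add: field_simps)
    have "p K * 3 ^ K < x * 3 ^ K" using h1 by linarith
    then have "p K < x" by (simp add: mult_less_cancel_right)
    then have ex: "\<exists>k. p k < x" by blast
    define j where "j = (LEAST k. p k < x)"
    have pj: "p j < x" unfolding j_def using LeastI_ex[OF ex] .
    have j0: "j \<noteq> 0" using pj xle by (cases j) auto
    then obtain m where jm: "j = Suc m" by (cases j) auto
    have pm: "x \<le> p m" using not_less_Least[of m "\<lambda>k. p k < x"] jm unfolding j_def by force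
    have pm1: "p (m + 1) < x" using pj jm by simp
    have Tz: "T x k = 0" if "k \<notin> {m, m + 1}" for k
    proof (cases "k < m")
      case True
      then have "x \<le> p (k + 1)" using panti[of "k+1" m] pm by simp
      moreover have "p (k + 1) \<le> p k" using panti[of k "k+1"] by simp
      moreover have "p k \<le> q k" using qge[of k] ppos[of k] by simp
      ultimately show ?thesis by (simp add: T_def)
    next
      case False
      then have k2: "k \<ge> m + 2" using that by auto
      then have qk: "q k = p (k - 1)" by (simp add: q_def)
      have "p (k - 1) \<le> p (m + 1)" using panti[of "m+1" "k-1"] k2 by simp
      then have "q k < x" using qk pm1 by simp
      moreover have "p k \<le> q k" using qge[of k] ppos[of k] by simp
      moreover have "p (k + 1) \<le> p k" using panti[of k "k+1"] by simp
      ultimately have "T x k = v k * (al k * (p k - p (k + 1)) - be k * (q k - p k))"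
        by (simp add: T_def algebra_simps)
      then show ?thesis using al_eq[of k] be_eq[of k] by simp
    qed
    have "(\<lambda>k. T x k) sums (\<Sum>k\<in>{m, m+1}. T x k)"
      by (rule sums_finite) (use Tz in auto)
    then have "(\<Sum>k. T x k) = T x m + T x (m + 1)" by (simp add: sums_iff)
    also have "T x m = v m * al m * (x - p (m + 1))"
      using pm pm1 qge[of m] ppos[of m] by (simp add: T_def)
    also have "T x (m + 1) = v (m + 1) * (al (m + 1) * (p (m + 1) - p (m + 2)) - be (m + 1) * (x - p (m + 1)))"
    proof -
      have "p (m + 2) < x" using panti[of "m+1" "m+2"] pm1 by simp
      moreover have "q (m + 1) = p m" by (simp add: q_def)
      ultimately show ?thesis using pm pm1 by (simp add: T_def algebra_simps)
    qed
    also have "v m * al m * (x - p (m + 1)) + v (m + 1) * (al (m + 1) * (p (m + 1) - p (m + 2)) - be (m + 1) * (x - p (m + 1)))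
       = (v m - v (m + 1)) / (p m - p (m + 1)) * (x - p (m + 1)) + v (m + 1)"
    proof -
      have e1: "al (m + 1) * (p (m + 1) - p (m + 2)) = 1" using al_eq[of "m+1"] by simp
      have e2: "be (m + 1) = 1 / (p m - p (m + 1))" by (simp add: be_def q_def)
      have e3: "al m = 1 / (p m - p (m + 1))" by (simp add: al_def)
      have "p m - p (m + 1) > 0" using gap[of m] ppos[of m] by simp
      have alg: "\<And>d y u w::real. d \<noteq> 0 \<Longrightarrow> u * (1 / d) * y + w * (1 - 1 / d * y) = (u - w) / d * y + w"
        by (simp add: field_simps)
      show ?thesis unfolding e1 e2 e3 by (rule alg) (use \<open>p m - p (m + 1) > 0\<close> in simp)
    qed
    also have "\<dots> = f x"
      using f_pieces[of "m + 1" x] pm pm1 unfolding p_def v_def by (simp add: add.commute)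
    finally show ?thesis using Feq[of x] by simp
  qed
  show ?thesis unfolding DCR_on_def
    using DC agree dec[of 1] by (intro conjI exI[of _ "\<lambda>x. S1 x + S2 x + S3 x"]) auto
qed

end
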